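(* For every prime $p\equiv 2 \pmod 3$, \begin{align*} \sum_{k=0}^{(p+1)/3}(6k-1)(18k^2-6k+1)\frac{(-1/3)^4_k}{k!^4}\equiv0\pmod{p^4}. \end{align*}
   Context: $(x)_0=1$ and $(x)_k=x(x+1)\cdots(x+k-1)$ is the Pochhammer symbol; $(x)_k^4$ means $((x)_k)^4$. The congruence of rational numbers modulo $p^4$ means the difference, written in lowest terms, has numerator divisible by $p^4$ and denominator not divisible by $p$. *)

theory Defs
  imports Complex_Main "HOL-Computational_Algebra.Primes"
begin

definition rat_cong_zero_mod_ppow :: "rat \<Rightarrow> int \<Rightarrow> nat \<Rightarrow> bool" where
  "rat_cong_zero_mod_ppow x p e =
     (let (a, b) = quotient_of x in p ^ e dvd a \<and> \<not> p dvd b)"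

end

theory Submission
  imports Defs
begin

lemma tele:
  "(\<Sum>k = 0..n.
      (6 * of_nat k - 1) * (18 * (of_nat k)^2 - 6 * of_nat k + 1)
      * (pochhammer (-1/3 :: rat) k) ^ 4 / (of_nat (fact k)) ^ 4)
   = - ((pochhammer (2/3::rat) n)^4 / (of_nat (fact n))^4)"
proof (induction n)
  case 0
  then show ?case by simp
next
  case (Suc n)
  have p1: "pochhammer (-1/3::rat) (Suc n) = (-1/3) * pochhammer (2/3) n"
    by (simp add: pochhammer_rec)
  have p2: "pochhammer (2/3::rat) (Suc n) = pochhammer (2/3) n * (2/3 + of_nat n)"
    by (simp add: pochhammer_Suc)
  have f: "(of_nat (fact (Suc n)) :: rat) = of_nat (Suc n) * of_nat (fact n)"
    by (simp add: fact_Suc algebra_simps)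
  have fn: "(of_nat (fact n) :: rat) \<noteq> 0" by simp
  have x1: "(1 + of_nat n :: rat) \<noteq> 0" by (metis of_nat_Suc of_nat_eq_0_iff nat.distinct(1) add.commute)
  have alg: "\<And>P F x::rat. F \<noteq> 0 \<Longrightarrow> 1 + x \<noteq> 0 \<Longrightarrow>
     - (P^4 / F^4) + (6 * (1 + x) - 1) * (18 * (1 + x)^2 - 6 * (1 + x) + 1) * ((-1/3) * P)^4 / ((1 + x) * F)^4
     = - ((P * (2/3 + x))^4 / ((1 + x) * F)^4)"
  proof -
    fix P F x :: rat assume h: "F \<noteq> 0" "1 + x \<noteq> 0"
    define D where "D = ((1 + x) * F)^4"
    have D0: "D \<noteq> 0" using h by (simp add: D_def)
    have e1: "P^4 / F^4 = P^4 * (1 + x)^4 / D" using h by (simp add: D_def power_mult_distrib)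
    have e2: "- (P^4 * (1 + x)^4) + (6 * (1 + x) - 1) * (18 * (1 + x)^2 - 6 * (1 + x) + 1) * ((-1/3) * P)^4
        = - ((P * (2/3 + x))^4)"
      by (simp add: field_simps power2_eq_square power4_eq_xxxx)
    have "- (P^4 / F^4) + (6 * (1 + x) - 1) * (18 * (1 + x)^2 - 6 * (1 + x) + 1) * ((-1/3) * P)^4 / D
      = (- (P^4 * (1 + x)^4) + (6 * (1 + x) - 1) * (18 * (1 + x)^2 - 6 * (1 + x) + 1) * ((-1/3) * P)^4) / D"
      unfolding e1 by (simp add: diff_divide_distrib add_divide_distrib)
    also have "\<dots> = - ((P * (2/3 + x))^4 / D)" unfolding e2 by simp
    finally show "- (P^4 / F^4) + (6 * (1 + x) - 1) * (18 * (1 + x)^2 - 6 * (1 + x) + 1) * ((-1/3) * P)^4 / ((1 + x) * F)^4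
     = - ((P * (2/3 + x))^4 / ((1 + x) * F)^4)"
      unfolding D_def .
  qed
  show ?case
    using Suc.IH alg[OF fn x1]
    by (simp only: sum.atLeast0_atMost_Suc p1 p2 f of_nat_Suc)
qed

lemma poch_int: "pochhammer (2/3::rat) n = of_int (\<Prod>i<n. 3 * int i + 2) / 3 ^ n"
proof (induction n)
  case 0 then show ?case by simp
next
  case (Suc n) then show ?case
    by (simp add: pochhammer_Suc field_simps)
qed

lemma cong_lemma:
  fixes a b :: int and p :: int
  assumes "prime p" "p ^ e dvd a" "\<not> p dvd b" "b \<noteq> 0"
  shows "rat_cong_zero_mod_ppow (of_int a / of_int b) p e"
proof -
  obtain a' b' where q: "quotient_of (of_int a / of_int b) = (a', b')" by (cases "quotient_of (of_int a / of_int b)") auto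
  have eq: "(of_int a / of_int b :: rat) = of_int a' / of_int b'" using quotient_of_div[OF q] .
  have bp: "b' > 0" using quotient_of_denom_pos[OF q] .
  have cop: "coprime a' b'" using quotient_of_coprime[OF q] .
  have m: "a' * b = a * b'"
  proof -
    have "(of_int a' :: rat) * of_int b = of_int a * of_int b'"
      using eq assms(4) bp by (simp add: field_simps)
    then show ?thesis by (metis of_int_eq_iff of_int_mult)
  qed
  have "p ^ e dvd a' * b" using m assms(2) by simp
  moreover have "coprime (p ^ e) b" using assms(1,3)
    by (simp add: prime_imp_coprime)
  ultimately have d1: "p ^ e dvd a'" using coprime_dvd_mult_left_iff by blast
  have "b' dvd a' * b" using m by simp
  then have "b' dvd b" using cop coprime_dvd_mult_right_iff coprime_commute by blast
  then have "\<not> p dvd b'" using assms(3) dvd_trans by blast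
  then show ?thesis using d1 q unfolding rat_cong_zero_mod_ppow_def by simp
qed

theorem mainTheorem6:
  fixes p :: nat
  assumes "prime p" and "p mod 3 = 2"
  shows "rat_cong_zero_mod_ppow
           (\<Sum>k = 0..(p + 1) div 3.
              (6 * of_nat k - 1) * (18 * (of_nat k)^2 - 6 * of_nat k + 1)
              * (pochhammer (-1/3 :: rat) k) ^ 4 / (of_nat (fact k)) ^ 4)
           (int p) 4"
proof -
  define n where "n = (p + 1) div 3"
  define A where "A = (\<Prod>i<n. 3 * int i + 2)"
  define B where "B = (3 ^ n * int (fact n))"
  have val: "(\<Sum>k = 0..n.
              (6 * of_nat k - 1) * (18 * (of_nat k)^2 - 6 * of_nat k + 1)
              * (pochhammer (-1/3 :: rat) k) ^ 4 / (of_nat (fact k)) ^ 4)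
        = of_int (- (A^4)) / of_int (B^4)"
    unfolding tele poch_int A_def B_def by (simp add: field_simps power_mult_distrib)
  have n3: "3 * n = p + 1" using assms(2) unfolding n_def by presburger
  have np: "n < p" "n \<ge> 1" using n3 prime_ge_2_nat[OF assms(1)] by linarith+
  have pint: "prime (int p)" using assms(1) by simp
  have "int p dvd A" unfolding A_def
    by (rule dvd_prod_eqI[where a="n - 1"]) (use n3 np in auto)
  then have "int p ^ 4 dvd - (A^4)" by simp
  moreover have "\<not> int p dvd B"
  proof
    assume "int p dvd B"
    then have "int p dvd 3 ^ n \<or> int p dvd int (fact n)" unfolding B_def
      using pint prime_dvd_mult_iff by blast
    moreover have "\<not> int p dvd 3 ^ n"
    proof
      assume "int p dvd 3 ^ n"
      then have "int p dvd 3" using pint prime_dvd_power by blast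
      then have "p dvd 3" by presburger
      then have "p \<le> 3" by (simp add: dvd_imp_le)
      moreover have "p = 2 \<or> p = 3" using \<open>p \<le> 3\<close> prime_ge_2_nat[OF assms(1)] by linarith
      ultimately show False using \<open>p dvd 3\<close> assms(2) by auto
    qed
    moreover have "\<not> p dvd fact n" using prime_dvd_fact_iff[OF assms(1)] np by simp
    ultimately show False by (metis of_nat_dvd_iff of_nat_fact)
  qed
  then have "\<not> int p dvd B^4" using pint prime_dvd_power by blast
  moreover have "B^4 \<noteq> 0" unfolding B_def by simp
  ultimately have "rat_cong_zero_mod_ppow (of_int (- (A^4)) / of_int (B^4)) (int p) 4"
    using cong_lemma pint by blast
  then show ?thesis using val n_def by simp
qed

end
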